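(* Let $\mathcal{S},\mathcal{T},\mathcal{U},\mathcal{B}$ be tile sets consisting only of exact tiles, with mutually consistent frequencies. Then \[ d(\mathcal{T},\mathcal{U};\mathcal{B})\le d(\mathcal{T},\mathcal{S};\mathcal{B})+d(\mathcal{S},\mathcal{U};\mathcal{B}). \]
   Context: Fix $n,m\ge1$; $\mathcal{D}$ is the set of $n\times m$ binary matrices. A tile is $T=(t(T),a(T))$ with nonempty $t(T)\subseteq\{1..n\}$, $a(T)\subseteq\{1..m\}$, $\mathrm{area}(T)=t(T)\times a(T)$. $\mathrm{fr}(T;D)=\frac1{|\mathrm{area}(T)|}\sum_{(i,j)\in\mathrm{area}(T)}D(i,j)$, $\mathrm{fr}(T;p)=\sum_Dp(D)\mathrm{fr}(T;D)$. Each tile carries a target frequency $\alpha_T$; tile sets are consistent if some distribution on $\mathcal{D}$ attains all target frequencies simultaneously. For a tile set $\mathcal{T}$, $p^*_{\mathcal{T}}$ is the entropy-maximising distribution among those with $\mathrm{fr}(T;p)=\alpha_T$ for all $T\in\mathcal{T}$. $\mathrm{KL}(\mathcal{T}\|\mathcal{U})=\mathrm{KL}(p^*_{\mathcal{T}}\|p^*_{\mathcal{U}})$. A tile is exact if its frequency is $0$ or $1$. With $\mathcal{M}=\mathcal{T}\cup\mathcal{U}\cup\mathcal{B}$, $d(\mathcal{T},\mathcal{U};\mathcal{B})=\frac{\mathrm{KL}(\mathcal{M}\|\mathcal{U}\cup\mathcal{B})+\mathrm{KL}(\mathcal{M}\|\mathcal{T}\cup\mathcal{B})}{\mathrm{KL}(\mathcal{M}\|\mathcal{B})}$,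 defined as $1$ if $\mathrm{KL}(\mathcal{M}\|\mathcal{B})=0$. *)

theory Defs
  imports Complex_Main
begin

text \<open>Binary n x m matrices: D i j = True means entry 1; entries outside {1..n}x{1..m} are False.\<close>
type_synonym matrix = "nat \<Rightarrow> nat \<Rightarrow> bool"
type_synonym tile = "nat set \<times> nat set"

definition mats :: "nat \<Rightarrow> nat \<Rightarrow> matrix set" where
  "mats n m = {D. \<forall>i j. D i j \<longrightarrow> i \<in> {1..n} \<and> j \<in> {1..m}}"

definition is_tile :: "nat \<Rightarrow> nat \<Rightarrow> tile \<Rightarrow> bool" where
  "is_tile n m T \<longleftrightarrow> fst T \<noteq> {} \<and> snd T \<noteq> {} \<and> fst T \<subseteq> {1..n} \<and> snd T \<subseteq> {1..m}"

definition area :: "tile \<Rightarrow> (nat \<times> nat) set" where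
  "area T = fst T \<times> snd T"

definition fr_mat :: "tile \<Rightarrow> matrix \<Rightarrow> real" where
  "fr_mat T D = (\<Sum>(i,j)\<in>area T. if D i j then 1 else 0) / real (card (area T))"

definition is_dist :: "nat \<Rightarrow> nat \<Rightarrow> (matrix \<Rightarrow> real) \<Rightarrow> bool" where
  "is_dist n m p \<longleftrightarrow> (\<forall>D. 0 \<le> p D) \<and> (\<forall>D. D \<notin> mats n m \<longrightarrow> p D = 0)
     \<and> (\<Sum>D\<in>mats n m. p D) = 1"

definition fr_dist :: "nat \<Rightarrow> nat \<Rightarrow> tile \<Rightarrow> (matrix \<Rightarrow> real) \<Rightarrow> real" where
  "fr_dist n m T p = (\<Sum>D\<in>mats n m. p D * fr_mat T D)"

definition feasible :: "nat \<Rightarrow> nat \<Rightarrow> (tile \<Rightarrow> real) \<Rightarrow> tile set \<Rightarrow> (matrix \<Rightarrow> real) set" where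
  "feasible n m alpha \<T> = {p. is_dist n m p \<and> (\<forall>T\<in>\<T>. fr_dist n m T p = alpha T)}"

definition entropy :: "nat \<Rightarrow> nat \<Rightarrow> (matrix \<Rightarrow> real) \<Rightarrow> real" where
  "entropy n m p = (\<Sum>D\<in>mats n m. if p D = 0 then 0 else - (p D * ln (p D)))"

definition maxent :: "nat \<Rightarrow> nat \<Rightarrow> (tile \<Rightarrow> real) \<Rightarrow> tile set \<Rightarrow> (matrix \<Rightarrow> real)" where
  "maxent n m alpha \<T> = (THE p. p \<in> feasible n m alpha \<T> \<and>
      (\<forall>q\<in>feasible n m alpha \<T>. entropy n m q \<le> entropy n m p))"

definition KL :: "nat \<Rightarrow> nat \<Rightarrow> (matrix \<Rightarrow> real) \<Rightarrow> (matrix \<Rightarrow> real) \<Rightarrow> real" where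
  "KL n m p q = (\<Sum>D\<in>mats n m. if p D = 0 then 0 else p D * ln (p D / q D))"

definition KLt :: "nat \<Rightarrow> nat \<Rightarrow> (tile \<Rightarrow> real) \<Rightarrow> tile set \<Rightarrow> tile set \<Rightarrow> real" where
  "KLt n m alpha \<T> \<U> = KL n m (maxent n m alpha \<T>) (maxent n m alpha \<U>)"

definition dd :: "nat \<Rightarrow> nat \<Rightarrow> (tile \<Rightarrow> real) \<Rightarrow> tile set \<Rightarrow> tile set \<Rightarrow> tile set \<Rightarrow> real" where
  "dd n m alpha \<T> \<U> \<B> =
     (let \<M> = \<T> \<union> \<U> \<union> \<B>; den = KLt n m alpha \<M> \<B> in
      if den = 0 then 1
      else (KLt n m alpha \<M> (\<U> \<union> \<B>) + KLt n m alpha \<M> (\<T> \<union> \<B>)) / den)"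

definition exact :: "(tile \<Rightarrow> real) \<Rightarrow> tile \<Rightarrow> bool" where
  "exact alpha T \<longleftrightarrow> alpha T = 0 \<or> alpha T = 1"

end

theory Submission
  imports Defs
begin


definition hh :: "real \<Rightarrow> real" where "hh q = (if q = 0 then 0 else - (q * ln q))"

lemma hh_le:
  assumes q: "0 \<le> q" and k: "0 < k"
  shows "hh q \<le> 1/k - q + q * ln k"
    and "q \<noteq> 1/k \<Longrightarrow> hh q < 1/k - q + q * ln k"
proof -
  have main: "hh q \<le> 1/k - q + q * ln k \<and> (q \<noteq> 1/k \<longrightarrow> hh q < 1/k - q + q * ln k)"
  proof (cases "q = 0")
    case True thus ?thesis using k by (simp add: hh_def)
  next
    case False
    hence qp: "q > 0" using q by simp
    define x where "x = 1/(q*k)"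
    have xp: "x > 0" using qp k by (simp add: x_def)
    have lnx: "ln x = - ln q - ln k" using qp k by (simp add: x_def ln_div ln_mult)
    have e1: "hh q = q * ln x + q * ln k" using False by (simp add: hh_def lnx algebra_simps)
    have e2: "1/k - q + q * ln k = q * (x - 1) + q * ln k" using qp k by (simp add: x_def field_simps)
    have le: "ln x \<le> x - 1" using ln_le_minus_one[OF xp] .
    have "q * ln x \<le> q * (x - 1)" using le qp by (simp add: mult_left_mono)
    moreover have "q \<noteq> 1/k \<longrightarrow> q * ln x < q * (x - 1)"
    proof
      assume "q \<noteq> 1/k"
      hence "x \<noteq> 1" using qp k by (auto simp: x_def field_simps)
      hence "ln x \<noteq> x - 1" using ln_eq_minus_one[OF xp] by auto
      hence "ln x < x - 1" using le by simp
      thus "q * ln x < q * (x - 1)" using qp by simp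
    qed
    ultimately show ?thesis using e1 e2 by auto
  qed
  show "hh q \<le> 1/k - q + q * ln k" using main by blast
  show "q \<noteq> 1/k \<Longrightarrow> hh q < 1/k - q + q * ln k" using main by blast
qed



lemma finite_mats: "finite (mats n m)"
proof -
  let ?G = "{1..n} \<times> {1..m}"
  have "mats n m \<subseteq> (\<lambda>S i j. (i,j) \<in> S) ` Pow ?G"
  proof
    fix D assume D: "D \<in> mats n m"
    have "D = (\<lambda>i j. (i,j) \<in> {(i,j). D i j})" by auto
    moreover have "{(i,j). D i j} \<in> Pow ?G" using D by (auto simp: mats_def)
    ultimately show "D \<in> (\<lambda>S i j. (i,j) \<in> S) ` Pow ?G" by blast
  qed
  thus ?thesis by (rule finite_subset) auto
qed

lemma fr_mat_bounds: "0 \<le> fr_mat T D" "fr_mat T D \<le> 1"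
proof -
  let ?s = "(\<Sum>(i,j)\<in>area T. if D i j then 1 else 0::real)"
  have s0: "0 \<le> ?s" by (rule sum_nonneg) auto
  have s1: "?s \<le> real (card (area T))"
    using sum_bounded_above[of "area T" "\<lambda>(i,j). if D i j then 1 else 0::real" 1] by (auto split: prod.splits)
  show "0 \<le> fr_mat T D" unfolding fr_mat_def using s0 by simp
  show "fr_mat T D \<le> 1" unfolding fr_mat_def using s0 s1
    by (cases "card (area T) = 0") (auto simp: divide_le_eq_1)
qed

definition CC :: "nat \<Rightarrow> nat \<Rightarrow> (tile \<Rightarrow> real) \<Rightarrow> tile set \<Rightarrow> matrix set" where
  "CC n m alpha X = {D \<in> mats n m. \<forall>T\<in>X. fr_mat T D = alpha T}"

definition unif :: "matrix set \<Rightarrow> matrix \<Rightarrow> real" where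
  "unif S = (\<lambda>D. if D \<in> S then 1 / real (card S) else 0)"

lemma dist_support: "is_dist n m p \<Longrightarrow> p D \<noteq> 0 \<Longrightarrow> D \<in> mats n m"
  unfolding is_dist_def by blast

lemma feasible_char:
  assumes ex: "\<forall>T\<in>X. exact alpha T"
  shows "p \<in> feasible n m alpha X \<longleftrightarrow> is_dist n m p \<and> (\<forall>D. p D \<noteq> 0 \<longrightarrow> D \<in> CC n m alpha X)"
proof
  assume "p \<in> feasible n m alpha X"
  hence d: "is_dist n m p" and fr: "\<forall>T\<in>X. fr_dist n m T p = alpha T" by (auto simp: feasible_def)
  have pnn: "\<And>D. 0 \<le> p D" and s1: "(\<Sum>D\<in>mats n m. p D) = 1" using d by (auto simp: is_dist_def)
  have "\<forall>D. p D \<noteq> 0 \<longrightarrow> D \<in> CC n m alpha X"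
  proof (intro allI impI)
    fix D assume pD: "p D \<noteq> 0"
    have Dm: "D \<in> mats n m" using dist_support[OF d pD] .
    have "\<forall>T\<in>X. fr_mat T D = alpha T"
    proof
      fix T assume T: "T \<in> X"
      have fd: "(\<Sum>D\<in>mats n m. p D * fr_mat T D) = alpha T" using fr T by (simp add: fr_dist_def)
      from ex T have "alpha T = 0 \<or> alpha T = 1" by (simp add: exact_def)
      thus "fr_mat T D = alpha T"
      proof
        assume a0: "alpha T = 0"
        have "\<forall>D'\<in>mats n m. p D' * fr_mat T D' = 0"
          using fd a0 sum_nonneg_eq_0_iff[OF finite_mats[of n m], where f="\<lambda>D. p D * fr_mat T D"] pnn fr_mat_bounds(1)
          by simp
        hence "p D * fr_mat T D = 0" using Dm by blast
        thus ?thesis using pD a0 by simp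
      next
        assume a1: "alpha T = 1"
        have "(\<Sum>D\<in>mats n m. p D * (1 - fr_mat T D)) = (\<Sum>D\<in>mats n m. p D) - (\<Sum>D\<in>mats n m. p D * fr_mat T D)"
          by (simp add: algebra_simps sum_subtractf)
        hence z: "(\<Sum>D\<in>mats n m. p D * (1 - fr_mat T D)) = 0" using s1 fd a1 by simp
        have "\<forall>D'\<in>mats n m. p D' * (1 - fr_mat T D') = 0"
          using z sum_nonneg_eq_0_iff[OF finite_mats[of n m], where f="\<lambda>D. p D * (1 - fr_mat T D)"] pnn fr_mat_bounds(2)
          by simp
        hence "p D * (1 - fr_mat T D) = 0" using Dm by blast
        thus ?thesis using pD a1 by simp
      qed
    qed
    thus "D \<in> CC n m alpha X" using Dm by (simp add: CC_def)
  qed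
  thus "is_dist n m p \<and> (\<forall>D. p D \<noteq> 0 \<longrightarrow> D \<in> CC n m alpha X)" using d by blast
next
  assume a: "is_dist n m p \<and> (\<forall>D. p D \<noteq> 0 \<longrightarrow> D \<in> CC n m alpha X)"
  have s1: "(\<Sum>D\<in>mats n m. p D) = 1" using a by (auto simp: is_dist_def)
  have "\<forall>T\<in>X. fr_dist n m T p = alpha T"
  proof
    fix T assume T: "T \<in> X"
    have "fr_dist n m T p = (\<Sum>D\<in>mats n m. p D * alpha T)"
      unfolding fr_dist_def
    proof (rule sum.cong[OF refl])
      fix D assume "D \<in> mats n m"
      show "p D * fr_mat T D = p D * alpha T"
        using a T by (cases "p D = 0") (auto simp: CC_def)
    qed
    also have "\<dots> = alpha T" using s1 by (simp add: sum_distrib_right[symmetric])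
    finally show "fr_dist n m T p = alpha T" .
  qed
  thus "p \<in> feasible n m alpha X" using a by (simp add: feasible_def)
qed



lemma entropy_hh: "entropy n m p = (\<Sum>D\<in>mats n m. hh (p D))"
  by (simp add: entropy_def hh_def)

lemma unif_dist:
  assumes S: "S \<subseteq> mats n m" "S \<noteq> {}"
  shows "is_dist n m (unif S)"
proof -
  have fS: "finite S" using S finite_mats finite_subset by blast
  have "(\<Sum>D\<in>mats n m. unif S D) = (\<Sum>D\<in>S. unif S D)"
    by (rule sum.mono_neutral_right) (use S finite_mats in \<open>auto simp: unif_def\<close>)
  also have "\<dots> = 1" using fS S by (simp add: unif_def)
  finally have "(\<Sum>D\<in>mats n m. unif S D) = 1" .
  moreover have "\<forall>D. 0 \<le> unif S D" by (simp add: unif_def)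
  moreover have "\<forall>D. D \<notin> mats n m \<longrightarrow> unif S D = 0" using S(1) by (auto simp: unif_def)
  ultimately show ?thesis unfolding is_dist_def by blast
qed

lemma entropy_bound:
  assumes S: "S \<subseteq> mats n m" "S \<noteq> {}" and d: "is_dist n m q"
    and supp: "\<forall>D. q D \<noteq> 0 \<longrightarrow> D \<in> S"
  shows "entropy n m q \<le> ln (real (card S))"
    and "q \<noteq> unif S \<Longrightarrow> entropy n m q < ln (real (card S))"
proof -
  have fS: "finite S" using S finite_mats finite_subset by blast
  define k where "k = real (card S)"
  have kp: "k > 0" using fS S by (simp add: k_def card_gt_0_iff)
  have qnn: "\<And>D. 0 \<le> q D" using d by (simp add: is_dist_def)
  have e: "entropy n m q = (\<Sum>D\<in>S. hh (q D))"
    unfolding entropy_hh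
    by (rule sum.mono_neutral_right) (use S finite_mats supp in \<open>auto simp: hh_def\<close>)
  have qs: "(\<Sum>D\<in>S. q D) = 1"
  proof -
    have "(\<Sum>D\<in>mats n m. q D) = (\<Sum>D\<in>S. q D)"
      by (rule sum.mono_neutral_right) (use S finite_mats supp in auto)
    thus ?thesis using d by (simp add: is_dist_def)
  qed
  have r: "(\<Sum>D\<in>S. 1/k - q D + q D * ln k) = ln k"
  proof -
    have "(\<Sum>D\<in>S. 1/k - q D + q D * ln k) = (\<Sum>D\<in>S. 1/k) - (\<Sum>D\<in>S. q D) + (\<Sum>D\<in>S. q D) * ln k"
      by (simp add: sum.distrib sum_subtractf sum_distrib_right)
    also have "(\<Sum>D\<in>S. 1/k) = 1" using kp by (simp add: k_def)
    finally show ?thesis using qs by simp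
  qed
  have "(\<Sum>D\<in>S. hh (q D)) \<le> (\<Sum>D\<in>S. 1/k - q D + q D * ln k)"
    by (rule sum_mono) (rule hh_le(1)[OF qnn kp])
  thus "entropy n m q \<le> ln (real (card S))" using e r k_def by simp
  assume ne: "q \<noteq> unif S"
  then obtain D0 where "q D0 \<noteq> unif S D0" by auto
  hence D0: "D0 \<in> S" "q D0 \<noteq> 1/k" using supp kp unfolding k_def by (auto simp: unif_def split: if_splits)
  have "(\<Sum>D\<in>S. hh (q D)) < (\<Sum>D\<in>S. 1/k - q D + q D * ln k)"
  proof (rule sum_strict_mono_ex1[OF fS])
    show "\<forall>D\<in>S. hh (q D) \<le> 1/k - q D + q D * ln k" using hh_le(1)[OF qnn kp] by blast
    show "\<exists>D\<in>S. hh (q D) < 1/k - q D + q D * ln k" using hh_le(2)[OF qnn kp] D0 by blast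
  qed
  thus "entropy n m q < ln (real (card S))" using e r k_def by simp
qed

lemma maxent_unif:
  assumes ex: "\<forall>T\<in>X. exact alpha T" and ne: "CC n m alpha X \<noteq> {}"
  shows "maxent n m alpha X = unif (CC n m alpha X)"
proof -
  let ?S = "CC n m alpha X"
  have Sm: "?S \<subseteq> mats n m" by (auto simp: CC_def)
  have uf: "unif ?S \<in> feasible n m alpha X"
  proof -
    have "\<forall>D. unif ?S D \<noteq> 0 \<longrightarrow> D \<in> ?S" by (simp add: unif_def)
    thus ?thesis using feasible_char[OF ex] unif_dist[OF Sm ne] by blast
  qed
  have fS: "finite ?S" using Sm finite_mats finite_subset by blast
  have eu: "entropy n m (unif ?S) = ln (real (card ?S))"
  proof -
    have "entropy n m (unif ?S) = (\<Sum>D\<in>?S. hh (unif ?S D))"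
      unfolding entropy_hh
      by (rule sum.mono_neutral_right) (use Sm finite_mats in \<open>auto simp: hh_def unif_def\<close>)
    also have "\<dots> = (\<Sum>D\<in>?S. - (1 / real (card ?S) * ln (1 / real (card ?S))))"
      using fS ne by (intro sum.cong) (auto simp: hh_def unif_def)
    also have "\<dots> = ln (real (card ?S))" using fS ne by (simp add: ln_div)
    finally show ?thesis .
  qed
  have bnd: "\<And>q. q \<in> feasible n m alpha X \<Longrightarrow> entropy n m q \<le> ln (real (card ?S))"
    using entropy_bound(1)[OF Sm ne] feasible_char[OF ex] by blast
  show ?thesis unfolding maxent_def
  proof (rule the_equality)
    show "unif ?S \<in> feasible n m alpha X \<and> (\<forall>q\<in>feasible n m alpha X. entropy n m q \<le> entropy n m (unif ?S))"
      using uf bnd eu by auto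
  next
    fix p assume p: "p \<in> feasible n m alpha X \<and> (\<forall>q\<in>feasible n m alpha X. entropy n m q \<le> entropy n m p)"
    hence "entropy n m (unif ?S) \<le> entropy n m p" using uf by blast
    hence "\<not> entropy n m p < ln (real (card ?S))" using eu by simp
    thus "p = unif ?S" using entropy_bound(2)[OF Sm ne] p feasible_char[OF ex] by blast
  qed
qed

lemma KL_unif:
  assumes A: "A \<subseteq> B" "A \<noteq> {}" "B \<subseteq> mats n m"
  shows "KL n m (unif A) (unif B) = ln (real (card B)) - ln (real (card A))"
proof -
  have fB: "finite B" using A finite_mats finite_subset by blast
  have fA: "finite A" using A fB finite_subset by blast
  have cA: "card A > 0" using fA A by (simp add: card_gt_0_iff)
  have cB: "card B > 0" using fB A by (auto simp: card_gt_0_iff)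
  have "KL n m (unif A) (unif B) = (\<Sum>D\<in>A. 1 / real (card A) * ln ((1 / real (card A)) / (1 / real (card B))))"
    unfolding KL_def
  proof (rule sum.mono_neutral_cong_right)
    show "finite (mats n m)" by (rule finite_mats)
    show "A \<subseteq> mats n m" using A by blast
    show "\<forall>D\<in>mats n m - A. (if unif A D = 0 then 0 else unif A D * ln (unif A D / unif B D)) = 0"
      by (simp add: unif_def)
    show "\<And>D. D \<in> A \<Longrightarrow> (if unif A D = 0 then 0 else unif A D * ln (unif A D / unif B D)) =
       1 / real (card A) * ln ((1 / real (card A)) / (1 / real (card B)))"
      using A cA by (auto simp: unif_def)
  qed
  also have "\<dots> = ln ((1 / real (card A)) / (1 / real (card B)))" using cA by simp
  also have "\<dots> = ln (real (card B)) - ln (real (card A))" using cA cB by (simp add: ln_div)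
  finally show ?thesis .
qed



lemma fr_mat_card: assumes fin: "finite (area T)" shows "fr_mat T D = real (card {c\<in>area T. D (fst c) (snd c)}) / real (card (area T))"
proof -
  have "(\<Sum>(i,j)\<in>area T. if D i j then 1 else 0::real) = (\<Sum>c\<in>area T. if D (fst c) (snd c) then 1 else 0)"
    by (simp add: case_prod_beta)
  also have "\<dots> = real (card {c\<in>area T. D (fst c) (snd c)})"
    using fin by (simp add: sum.If_cases Int_def)
  finally show ?thesis by (simp add: fr_mat_def)
qed

lemma fr_char:
  assumes t: "is_tile n m T" and e: "exact alpha T" and d0: "fr_mat T D0 = alpha T"
  shows "fr_mat T D = alpha T \<longleftrightarrow> (\<forall>(i,j)\<in>area T. D i j = D0 i j)"
proof -
  let ?A = "area T"
  have fA: "finite ?A" using t by (auto simp: is_tile_def area_def intro: finite_subset)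
  have nA: "?A \<noteq> {}" using t by (auto simp: is_tile_def area_def)
  have cA: "card ?A > 0" using fA nA by (simp add: card_gt_0_iff)
  have one: "\<And>D. fr_mat T D = 1 \<longleftrightarrow> (\<forall>(i,j)\<in>?A. D i j)"
  proof -
    fix D
    let ?F = "{c\<in>?A. D (fst c) (snd c)}"
    have "fr_mat T D = 1 \<longleftrightarrow> card ?F = card ?A" using cA fA nA by (simp add: fr_mat_card) (rule eq_commute)
    also have "\<dots> \<longleftrightarrow> ?F = ?A" using fA by (metis (no_types, lifting) card_subset_eq mem_Collect_eq subsetI)
    also have "\<dots> \<longleftrightarrow> (\<forall>(i,j)\<in>?A. D i j)" by (auto; metis (mono_tags, lifting) fst_conv mem_Collect_eq snd_conv)
    finally show "fr_mat T D = 1 \<longleftrightarrow> (\<forall>(i,j)\<in>?A. D i j)" .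
  qed
  have zero: "\<And>D. fr_mat T D = 0 \<longleftrightarrow> (\<forall>(i,j)\<in>?A. \<not> D i j)"
  proof -
    fix D
    let ?F = "{c\<in>?A. D (fst c) (snd c)}"
    have fF: "finite ?F" using fA by simp
    have "fr_mat T D = 0 \<longleftrightarrow> card ?F = 0" using cA fA nA by (simp add: fr_mat_card)
    also have "\<dots> \<longleftrightarrow> ?F = {}" using fF by simp
    also have "\<dots> \<longleftrightarrow> (\<forall>(i,j)\<in>?A. \<not> D i j)" by auto
    finally show "fr_mat T D = 0 \<longleftrightarrow> (\<forall>(i,j)\<in>?A. \<not> D i j)" .
  qed
  from e have "alpha T = 0 \<or> alpha T = 1" by (simp add: exact_def)
  thus ?thesis
  proof
    assume a: "alpha T = 0"
    hence "\<forall>(i,j)\<in>?A. \<not> D0 i j" using zero d0 by simp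
    thus ?thesis using zero[of D] a by auto
  next
    assume a: "alpha T = 1"
    hence "\<forall>(i,j)\<in>?A. D0 i j" using one d0 by simp
    thus ?thesis using one[of D] a by auto
  qed
qed

definition cells :: "tile set \<Rightarrow> (nat \<times> nat) set" where
  "cells X = (\<Union>T\<in>X. area T)"

lemma CC_cells:
  assumes h: "\<forall>T\<in>X. is_tile n m T \<and> exact alpha T" and d0: "D0 \<in> CC n m alpha X"
  shows "CC n m alpha X = {D\<in>mats n m. \<forall>(i,j)\<in>cells X. D i j = D0 i j}"
proof -
  have "\<And>D. (\<forall>T\<in>X. fr_mat T D = alpha T) \<longleftrightarrow> (\<forall>(i,j)\<in>cells X. D i j = D0 i j)"
  proof -
    fix D
    have "(\<forall>T\<in>X. fr_mat T D = alpha T) \<longleftrightarrow> (\<forall>T\<in>X. \<forall>(i,j)\<in>area T. D i j = D0 i j)"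
    proof -
      have "\<forall>T\<in>X. (fr_mat T D = alpha T) = (\<forall>(i,j)\<in>area T. D i j = D0 i j)"
      proof
        fix T assume T: "T \<in> X"
        show "(fr_mat T D = alpha T) = (\<forall>(i,j)\<in>area T. D i j = D0 i j)"
          using fr_char[of n m T alpha D0 D] h d0 T by (simp add: CC_def)
      qed
      thus ?thesis by blast
    qed
    also have "\<dots> \<longleftrightarrow> (\<forall>(i,j)\<in>cells X. D i j = D0 i j)" by (auto simp: cells_def)
    finally show "(\<forall>T\<in>X. fr_mat T D = alpha T) \<longleftrightarrow> (\<forall>(i,j)\<in>cells X. D i j = D0 i j)" .
  qed
  thus ?thesis by (simp add: CC_def)
qed

lemma card_fix:
  assumes D0: "D0 \<in> mats n m" and F: "F \<subseteq> {1..n} \<times> {1..m}"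
  shows "card {D\<in>mats n m. \<forall>(i,j)\<in>F. D i j = D0 i j} = 2 ^ (card ({1..n} \<times> {1..m}) - card F)"
proof -
  let ?G = "{1..n} \<times> {1..m}"
  let ?C = "{D\<in>mats n m. \<forall>(i,j)\<in>F. D i j = D0 i j}"
  define f where "f D = {(i,j)\<in>?G - F. D i j}" for D :: matrix
  define g where "g R = (\<lambda>i j. (i,j) \<in> R \<or> ((i,j) \<in> F \<and> D0 i j))" for R
  have "bij_betw f ?C (Pow (?G - F))"
  proof (rule bij_betw_byWitness[where f'=g])
    show "\<forall>a\<in>?C. g (f a) = a"
    proof
      fix D assume D: "D \<in> ?C"
      show "g (f D) = D"
      proof (intro ext)
        fix i j
        show "g (f D) i j = D i j"
          using D D0 by (auto simp: g_def f_def mats_def)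
      qed
    qed
    show "\<forall>a'\<in>Pow (?G - F). f (g a') = a'"
      by (auto simp: f_def g_def)
    show "f ` ?C \<subseteq> Pow (?G - F)" by (auto simp: f_def)
    show "g ` Pow (?G - F) \<subseteq> ?C"
      using D0 F by (auto simp: g_def mats_def)
  qed
  hence "card ?C = card (Pow (?G - F))" by (rule bij_betw_same_card)
  also have "\<dots> = 2 ^ card (?G - F)" by (simp add: card_Pow)
  also have "card (?G - F) = card ?G - card F" using F by (simp add: card_Diff_subset finite_subset)
  finally show ?thesis .
qed



definition Jr :: "real \<Rightarrow> real \<Rightarrow> real \<Rightarrow> real" where
  "Jr P a c = (if P = 0 then 1 else (2*P - a - c) / P)"

lemma Jr_bounds: assumes "0 \<le> P" "a \<le> P" "c \<le> P" "P \<le> a + c"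
  shows "0 \<le> Jr P a c" "Jr P a c \<le> 1"
  using assms by (auto simp: Jr_def divide_simps)

lemma jreal:
  fixes a b c P Q R W :: real
  assumes nn: "0 \<le> a" "0 \<le> b" "0 \<le> c"
    and P: "a \<le> P" "c \<le> P" "P \<le> a + c"
    and Q: "a \<le> Q" "b \<le> Q" "Q \<le> a + b"
    and R: "b \<le> R" "c \<le> R" "R \<le> b + c"
    and W: "P \<le> W" "Q \<le> W" "R \<le> W" "W + b \<le> Q + R"
  shows "Jr P a c \<le> Jr Q a b + Jr R b c"
proof -
  have b1: "0 \<le> Jr P a c" "Jr P a c \<le> 1" using Jr_bounds[of P a c] nn P by auto
  have b2: "0 \<le> Jr Q a b" "Jr Q a b \<le> 1" using Jr_bounds[of Q a b] nn Q by auto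
  have b3: "0 \<le> Jr R b c" "Jr R b c \<le> 1" using Jr_bounds[of R b c] nn R by auto
  show ?thesis
  proof (cases "Q = 0 \<or> R = 0")
    case True thus ?thesis using b1 b2 b3 by (auto simp: Jr_def)
  next
    case False
    hence Qp: "Q > 0" and Rp: "R > 0" using nn Q R by auto
    show ?thesis
    proof (cases "P = 0")
      case True
      hence "a = 0" "c = 0" using nn P by auto
      hence "Jr Q a b = 1" using Q Qp by (simp add: Jr_def)
      thus ?thesis using b3 True by (simp add: Jr_def)
    next
      case False
      hence Pp: "P > 0" using nn P by auto
      have Wp: "W > 0" using Pp W by auto
      define x where "x = 2*P - a - c"
      define y where "y = 2*Q - a - b"
      define z where "z = 2*R - b - c"
      have x0: "0 \<le> x" "x \<le> P" using P by (auto simp: x_def)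
      have y0: "0 \<le> y" using Q by (auto simp: y_def)
      have z0: "0 \<le> z" using R by (auto simp: z_def)
      have yz: "x + 2*(W-P) \<le> y + z" using W by (simp add: x_def y_def z_def)
      have "0 \<le> (W-P)*(2*P-x)" using W x0 by (intro mult_nonneg_nonneg) auto
      hence k1: "x * W \<le> (x + 2*(W-P)) * P" by (simp add: algebra_simps)
      have s1: "x / P \<le> (x + 2*(W-P)) / W"
        using k1 Pp Wp by (simp add: divide_simps mult.commute)
      have s2: "(x + 2*(W-P)) / W \<le> (y + z) / W"
        using yz Wp by (simp add: divide_right_mono)
      have s3: "y / W \<le> y / Q" using y0 Qp W by (intro divide_left_mono) auto
      have s4: "z / W \<le> z / R" using z0 Rp W by (intro divide_left_mono) auto
      have "(y + z) / W = y / W + z / W" by (simp add: add_divide_distrib)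
      hence "x / P \<le> y / Q + z / R" using s1 s2 s3 s4 by linarith
      thus ?thesis using Pp Qp Rp by (simp add: Jr_def x_def y_def z_def)
    qed
  qed
qed

lemma jsets:
  assumes f: "finite A" "finite B" "finite C"
  shows "Jr (card (A \<union> C)) (card A) (card C) \<le> Jr (card (A \<union> B)) (card A) (card B) + Jr (card (B \<union> C)) (card B) (card C)"
proof (rule jreal)
  show "real (card (A \<union> C)) \<le> real (card A) + real (card C)" using card_Un_le[of A C] by linarith
  show "real (card (A \<union> B)) \<le> real (card A) + real (card B)" using card_Un_le[of A B] by linarith
  show "real (card (B \<union> C)) \<le> real (card B) + real (card C)" using card_Un_le[of B C] by linarith
  show "real (card A) \<le> real (card (A \<union> C))" using f by (simp add: card_mono)
  show "real (card C) \<le> real (card (A \<union> C))" using f by (simp add: card_mono)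
  show "real (card A) \<le> real (card (A \<union> B))" using f by (simp add: card_mono)
  show "real (card B) \<le> real (card (A \<union> B))" using f by (simp add: card_mono)
  show "real (card B) \<le> real (card (B \<union> C))" using f by (simp add: card_mono)
  show "real (card C) \<le> real (card (B \<union> C))" using f by (simp add: card_mono)
  have "A \<union> C \<subseteq> A \<union> B \<union> C" by blast
  then show "real (card (A \<union> C)) \<le> real (card (A \<union> B \<union> C))" using f by (metis card_mono finite_UnI of_nat_le_iff)
  have "A \<union> B \<subseteq> A \<union> B \<union> C" by blast
  then show "real (card (A \<union> B)) \<le> real (card (A \<union> B \<union> C))" using f by (metis card_mono finite_UnI of_nat_le_iff)
  have "B \<union> C \<subseteq> A \<union> B \<union> C" by blast
  then show "real (card (B \<union> C)) \<le> real (card (A \<union> B \<union> C))" using f by (metis card_mono finite_UnI of_nat_le_iff)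
  have e1: "card (A \<union> B) + card (B \<union> C) = card ((A \<union> B) \<union> (B \<union> C)) + card ((A \<union> B) \<inter> (B \<union> C))"
    by (rule card_Un_Int) (use f in auto)
  have e2: "(A \<union> B) \<union> (B \<union> C) = A \<union> B \<union> C" by auto
  have e3: "card B \<le> card ((A \<union> B) \<inter> (B \<union> C))" using f by (intro card_mono) auto
  have "card (A \<union> B \<union> C) + card B \<le> card (A \<union> B) + card (B \<union> C)"
    using e1 e3 unfolding e2 by linarith
  then show "real (card (A \<union> B \<union> C)) + real (card B) \<le> real (card (A \<union> B)) + real (card (B \<union> C))"
    by (simp only: of_nat_add[symmetric] of_nat_le_iff)
qed auto



lemma cells_Un: "cells (X \<union> Y) = cells X \<union> cells Y" by (auto simp: cells_def)

lemma cells_sub: "\<forall>T\<in>X. is_tile n m T \<Longrightarrow> cells X \<subseteq> {1..n} \<times> {1..m}"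
  by (auto simp: cells_def is_tile_def area_def)

lemma CC_anti: "X \<subseteq> Y \<Longrightarrow> CC n m alpha Y \<subseteq> CC n m alpha X"
  by (auto simp: CC_def)

lemma KLt_formula:
  assumes h: "\<forall>T\<in>Full. is_tile n m T \<and> exact alpha T" and d0: "D0 \<in> CC n m alpha Full"
    and YM: "Y \<subseteq> M" and MF: "M \<subseteq> Full"
  shows "KLt n m alpha M Y = (real (card (cells M)) - real (card (cells Y))) * ln 2"
proof -
  let ?G = "{1..n} \<times> {1..m}"
  have gen: "maxent n m alpha X = unif (CC n m alpha X) \<and> CC n m alpha X \<noteq> {} \<and> CC n m alpha X \<subseteq> mats n m
      \<and> ln (real (card (CC n m alpha X))) = (real (card ?G) - real (card (cells X))) * ln 2"
    if X: "X \<subseteq> Full" for X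
  proof -
    have hX: "\<forall>T\<in>X. is_tile n m T \<and> exact alpha T" using h X by blast
    have dX: "D0 \<in> CC n m alpha X" using d0 CC_anti[OF X] by blast
    have ne: "CC n m alpha X \<noteq> {}" using dX by blast
    have me: "maxent n m alpha X = unif (CC n m alpha X)" using maxent_unif[OF _ ne] hX by blast
    have D0m: "D0 \<in> mats n m" using dX by (simp add: CC_def)
    have cs: "cells X \<subseteq> ?G" using cells_sub hX by blast
    have cG: "card (cells X) \<le> card ?G" using cs by (intro card_mono) auto
    have "card (CC n m alpha X) = 2 ^ (card ?G - card (cells X))"
      using CC_cells[OF hX dX] card_fix[OF D0m cs] by simp
    hence "ln (real (card (CC n m alpha X))) = real (card ?G - card (cells X)) * ln 2"
      by (simp add: ln_realpow)
    also have "\<dots> = (real (card ?G) - real (card (cells X))) * ln 2" using cG by (simp add: of_nat_diff)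
    finally show ?thesis using me ne by (auto simp: CC_def)
  qed
  have gM: "maxent n m alpha M = unif (CC n m alpha M) \<and> CC n m alpha M \<noteq> {} \<and> CC n m alpha M \<subseteq> mats n m
      \<and> ln (real (card (CC n m alpha M))) = (real (card ?G) - real (card (cells M))) * ln 2"
    using gen MF by blast
  have gY: "maxent n m alpha Y = unif (CC n m alpha Y) \<and> CC n m alpha Y \<noteq> {} \<and> CC n m alpha Y \<subseteq> mats n m
      \<and> ln (real (card (CC n m alpha Y))) = (real (card ?G) - real (card (cells Y))) * ln 2"
    using gen YM MF by blast
  have sub: "CC n m alpha M \<subseteq> CC n m alpha Y" using CC_anti[OF YM] .
  have "KLt n m alpha M Y = ln (real (card (CC n m alpha Y))) - ln (real (card (CC n m alpha M)))"
    unfolding KLt_def using gM gY KL_unif[OF sub] by simp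
  also have "\<dots> = (real (card (cells M)) - real (card (cells Y))) * ln 2"
    using gM gY by (simp add: algebra_simps)
  finally show ?thesis .
qed

lemma card_split:
  assumes "finite Bc" "finite Z"
  shows "card (Bc \<union> Z) = card Bc + card (Z - Bc)"
proof -
  have "Bc \<union> Z = Bc \<union> (Z - Bc)" by auto
  moreover have "card (Bc \<union> (Z - Bc)) = card Bc + card (Z - Bc)"
    by (rule card_Un_disjoint) (use assms in auto)
  ultimately show ?thesis by simp
qed

lemma dd_formula:
  assumes h: "\<forall>T\<in>Full. is_tile n m T \<and> exact alpha T" and d0: "D0 \<in> CC n m alpha Full"
    and sub: "T \<subseteq> Full" "U \<subseteq> Full" "B \<subseteq> Full"
  shows "dd n m alpha T U B = Jr (card ((cells T - cells B) \<union> (cells U - cells B)))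
           (card (cells T - cells B)) (card (cells U - cells B))"
proof -
  let ?M = "T \<union> U \<union> B"
  let ?t = "cells T - cells B" and ?u = "cells U - cells B"
  have fin: "\<And>X. X \<subseteq> Full \<Longrightarrow> finite (cells X)"
  proof -
    fix X assume "X \<subseteq> Full"
    hence "cells X \<subseteq> {1..n} \<times> {1..m}" using cells_sub h by blast
    thus "finite (cells X)" by (rule finite_subset) auto
  qed
  have fT: "finite (cells T)" and fU: "finite (cells U)" and fB: "finite (cells B)" using fin sub by auto
  have MF: "?M \<subseteq> Full" using sub by auto
  have cM: "card (cells ?M) = card (cells B) + card (?t \<union> ?u)"
  proof -
    have "cells ?M = cells B \<union> (cells T \<union> cells U)" by (auto simp: cells_Un)
    moreover have "(cells T \<union> cells U) - cells B = ?t \<union> ?u" by auto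
    ultimately show ?thesis using card_split[OF fB, of "cells T \<union> cells U"] fT fU by simp
  qed
  have cUB: "card (cells (U \<union> B)) = card (cells B) + card ?u"
    using card_split[OF fB fU] by (simp add: cells_Un Un_commute)
  have cTB: "card (cells (T \<union> B)) = card (cells B) + card ?t"
    using card_split[OF fB fT] by (simp add: cells_Un Un_commute)
  have k1: "KLt n m alpha ?M (U \<union> B) = (real (card (?t \<union> ?u)) - real (card ?u)) * ln 2"
    using KLt_formula[OF h d0 _ MF, of "U \<union> B"] cM cUB by auto
  have k2: "KLt n m alpha ?M (T \<union> B) = (real (card (?t \<union> ?u)) - real (card ?t)) * ln 2"
    using KLt_formula[OF h d0 _ MF, of "T \<union> B"] cM cTB by auto
  have k3: "KLt n m alpha ?M B = real (card (?t \<union> ?u)) * ln 2"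
    using KLt_formula[OF h d0 _ MF, of "B"] cM by auto
  have l2: "ln (2::real) > 0" by simp
  show ?thesis
  proof (cases "card (?t \<union> ?u) = 0")
    case True
    thus ?thesis unfolding dd_def Let_def using k3 by (simp add: Jr_def)
  next
    case False
    hence "KLt n m alpha ?M B \<noteq> 0" using k3 l2 by simp
    hence "dd n m alpha T U B = (KLt n m alpha ?M (U \<union> B) + KLt n m alpha ?M (T \<union> B)) / KLt n m alpha ?M B"
      unfolding dd_def Let_def by simp
    also have "\<dots> = ((real (card (?t \<union> ?u)) - real (card ?u)) + (real (card (?t \<union> ?u)) - real (card ?t))) * ln 2
        / (real (card (?t \<union> ?u)) * ln 2)" unfolding k1 k2 k3 by (simp add: algebra_simps)
    also have "\<dots> = Jr (card (?t \<union> ?u)) (card ?t) (card ?u)"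
      using False l2 by (simp add: Jr_def)
    finally show ?thesis .
  qed
qed

theorem theorem8:
  fixes n m :: nat and alpha :: "tile \<Rightarrow> real" and \<S> \<T> \<U> \<B> :: "tile set"
  assumes "1 \<le> n" and "1 \<le> m"
    and "\<forall>T\<in>\<S> \<union> \<T> \<union> \<U> \<union> \<B>. is_tile n m T \<and> exact alpha T"
    and "feasible n m alpha (\<S> \<union> \<T> \<union> \<U> \<union> \<B>) \<noteq> {}"
  shows "dd n m alpha \<T> \<U> \<B> \<le> dd n m alpha \<T> \<S> \<B> + dd n m alpha \<S> \<U> \<B>"
proof -
  let ?F = "\<S> \<union> \<T> \<union> \<U> \<union> \<B>"
  have h: "\<forall>T\<in>?F. is_tile n m T \<and> exact alpha T" using assms(3) .
  have ex: "\<forall>T\<in>?F. exact alpha T" using h by blast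
  obtain p where p: "p \<in> feasible n m alpha ?F" using assms(4) by blast
  have pd: "is_dist n m p" and ps: "\<forall>D. p D \<noteq> 0 \<longrightarrow> D \<in> CC n m alpha ?F"
    using p feasible_char[OF ex] by blast+
  have "\<exists>D. p D \<noteq> 0"
  proof (rule ccontr)
    assume "\<not> (\<exists>D. p D \<noteq> 0)"
    hence "(\<Sum>D\<in>mats n m. p D) = 0" by simp
    thus False using pd by (simp add: is_dist_def)
  qed
  then obtain D0 where "p D0 \<noteq> 0" by blast
  hence d0: "D0 \<in> CC n m alpha ?F" using ps by blast
  have fin: "\<And>X. X \<subseteq> ?F \<Longrightarrow> finite (cells X)"
  proof -
    fix X assume "X \<subseteq> ?F"
    hence "cells X \<subseteq> {1..n} \<times> {1..m}" using cells_sub h by blast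
    thus "finite (cells X)" by (rule finite_subset) auto
  qed
  have e1: "dd n m alpha \<T> \<U> \<B> = Jr (card ((cells \<T> - cells \<B>) \<union> (cells \<U> - cells \<B>)))
           (card (cells \<T> - cells \<B>)) (card (cells \<U> - cells \<B>))"
    by (rule dd_formula[OF h d0]) auto
  have e2: "dd n m alpha \<T> \<S> \<B> = Jr (card ((cells \<T> - cells \<B>) \<union> (cells \<S> - cells \<B>)))
           (card (cells \<T> - cells \<B>)) (card (cells \<S> - cells \<B>))"
    by (rule dd_formula[OF h d0]) auto
  have e3: "dd n m alpha \<S> \<U> \<B> = Jr (card ((cells \<S> - cells \<B>) \<union> (cells \<U> - cells \<B>)))
           (card (cells \<S> - cells \<B>)) (card (cells \<U> - cells \<B>))"
    by (rule dd_formula[OF h d0]) auto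
  have f: "finite (cells \<T> - cells \<B>)" "finite (cells \<S> - cells \<B>)" "finite (cells \<U> - cells \<B>)"
    using fin[of \<T>] fin[of \<S>] fin[of \<U>] by auto
  show ?thesis unfolding e1 e2 e3 by (rule jsets[OF f])
qed

end
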